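(* There exist finite category presentations $C,D,E$ and finite nongenerative uncurried profunctor presentations $P:C\nrightarrow D$ and $Q:D\nrightarrow E$ such that $[\![P]\!]\odot[\![Q]\!]:[\![C]\!]\nrightarrow[\![E]\!]$ does not admit a finite uncurried profunctor presentation (i.e. is not isomorphic to $[\![R]\!]$ for any finite uncurried presentation $R:C\nrightarrow E$).
   Context: Category presentations $C$: sorts, function symbols $f:c\to c'$, equations $C_E$ between parallel paths (composable lists of function symbols, possibly empty); finite if all these sets are finite. Provable equality $\approx_C$: the smallest equivalence relation on paths containing $C_E$ and closed under concatenation with composable function symbols; $[\![C]\!]$: sorts as objects, $\approx_C$-classes of paths as morphisms. Profunctors $\mathcal P:\mathcal C\nrightarrow\mathcal D$: categories over $\mathbf 2=\{0\to1\}$ with fibres $\mathcal C,\mathcal D$, equivalently functors $\mathcal C^{op}\times\mathcal D\to\mathbf{Set}$. Composite: $(\mathcal P\odot\mathcal Q)(c,e)=\int^{d}\mathcal P(c,d)\times\mathcal Q(d,e)$, the quotient of $\coprod_d\mathcal P(c,d)\times\mathcal Q(d,e)$ by the equivalence relation generated by $(p,\mathcal Q(g,1)q')\sim(\mathcal P(1,g)p,q')$ for $g:d\to d'$. Uncurried presentations $P:C\nrightarrow D$: a set $\mathrm{Fun}(P)$ of symbols $x:c\to d$ ($c$ a $C$-sort, $d$ a $D$-sort) and a set $P_E$ of equations between cross-paths (paths from a $C$-sort to a $D$-sort) of the category presentation $|P|$ with sorts $\mathrm{Sort}(C)+\mathrm{Sort}(D)$, symbols $\mathrm{Fun}(C)+\mathrm{Fun}(P)+\mathrm{Fun}(D)$,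 equations $C_E+P_E+D_E$; $\approx_P$ is provable equality of $|P|$ restricted to cross-paths; finite if $C,D,\mathrm{Fun}(P),P_E$ are finite; $[\![P]\!]=[\![|P|]\!]$ with $C$-sorts over $0$, $D$-sorts over $1$. A short left cross-path is $f.p$ with $f\in\mathrm{Fun}(C)$, $p\in\mathrm{Fun}(P)$; a right cross-path is $p.g$ with $p\in\mathrm{Fun}(P)$ and $g$ a $D$-path. $P$ is nongenerative if every short left cross-path is $\approx_P$-equal to some right cross-path. *)

theory Defs
  imports Main
begin

text \<open>Paths are written in diagrammatic order as lists of symbols, together with
 their source sort (so that empty paths carry a sort). An equation (s,u,v) equates the paths
 u and v starting at sort s.\<close>

record ('s, 'f) catpres =
  sorts :: "'s set"
  funs  :: "'f set"
  fsrc  :: "'f \<Rightarrow> 's"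
  ftgt  :: "'f \<Rightarrow> 's"
  eqns  :: "('s \<times> 'f list \<times> 'f list) set"

fun chain :: "('s, 'f) catpres \<Rightarrow> 's \<Rightarrow> 'f list \<Rightarrow> 's \<Rightarrow> bool" where
  "chain T s [] t \<longleftrightarrow> s \<in> sorts T \<and> t = s"
| "chain T s (f # fs) t \<longleftrightarrow> s \<in> sorts T \<and> f \<in> funs T \<and> fsrc T f = s \<and> chain T (ftgt T f) fs t"

definition wf_catpres :: "('s, 'f) catpres \<Rightarrow> bool" where
  "wf_catpres T \<longleftrightarrow>
     (\<forall>f \<in> funs T. fsrc T f \<in> sorts T \<and> ftgt T f \<in> sorts T) \<and>
     (\<forall>(s, u, v) \<in> eqns T. \<exists>t. chain T s u t \<and> chain T s v t)"

definition finite_catpres :: "('s, 'f) catpres \<Rightarrow> bool" where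
  "finite_catpres T \<longleftrightarrow> finite (sorts T) \<and> finite (funs T) \<and> finite (eqns T)"

inductive peq :: "('s, 'f) catpres \<Rightarrow> 's \<Rightarrow> 'f list \<Rightarrow> 'f list \<Rightarrow> bool" for T where
  ax:   "(s, u, v) \<in> eqns T \<Longrightarrow> peq T s u v"
| rfl:  "chain T s u t \<Longrightarrow> peq T s u u"
| sym:  "peq T s u v \<Longrightarrow> peq T s v u"
| trans: "peq T s u v \<Longrightarrow> peq T s v w \<Longrightarrow> peq T s u w"
| pre:  "peq T s u v \<Longrightarrow> f \<in> funs T \<Longrightarrow> ftgt T f = s \<Longrightarrow> peq T (fsrc T f) (f # u) (f # v)"
| post: "peq T s u v \<Longrightarrow> chain T s u t \<Longrightarrow> f \<in> funs T \<Longrightarrow> fsrc T f = t \<Longrightarrow>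
         peq T s (u @ [f]) (v @ [f])"

text \<open>Morphisms of the presented category [[T]]: provable-equality classes of paths.\<close>
definition cls :: "('s, 'f) catpres \<Rightarrow> 's \<Rightarrow> 'f list \<Rightarrow> 'f list set" where
  "cls T s u = {v. peq T s u v}"

definition homs :: "('s, 'f) catpres \<Rightarrow> 's \<Rightarrow> 's \<Rightarrow> 'f list set set" where
  "homs T s t = {cls T s u | u. chain T s u t}"

text \<open>P : C -/-> D with C-sorts 'a, D-sorts 'b, C-symbols 'f, D-symbols 'g, P-symbols 'p.
 The combined presentation |P| has sorts 'a + 'b and symbols 'f + 'p + 'g.\<close>

record ('a, 'b, 'f, 'g, 'p) upres =
  pfuns :: "'p set"
  psrc  :: "'p \<Rightarrow> 'a"
  ptgt  :: "'p \<Rightarrow> 'b"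
  peqns :: "(('a + 'b) \<times> ('f + 'p + 'g) list \<times> ('f + 'p + 'g) list) set"

definition tot :: "('a, 'f) catpres \<Rightarrow> ('a, 'b, 'f, 'g, 'p) upres \<Rightarrow> ('b, 'g) catpres
                     \<Rightarrow> ('a + 'b, 'f + 'p + 'g) catpres" where
  "tot C P D = \<lparr> sorts = Inl ` sorts C \<union> Inr ` sorts D,
      funs = Inl ` funs C \<union> (Inr \<circ> Inl) ` pfuns P \<union> (Inr \<circ> Inr) ` funs D,
      fsrc = case_sum (Inl \<circ> fsrc C) (case_sum (Inl \<circ> psrc P) (Inr \<circ> fsrc D)),
      ftgt = case_sum (Inl \<circ> ftgt C) (case_sum (Inr \<circ> ptgt P) (Inr \<circ> ftgt D)),
      eqns = (\<lambda>(s, u, v). (Inl s, map Inl u, map Inl v)) ` eqns C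
             \<union> peqns P
             \<union> (\<lambda>(s, u, v). (Inr s, map (Inr \<circ> Inr) u, map (Inr \<circ> Inr) v)) ` eqns D \<rparr>"

definition wf_upres :: "('a, 'f) catpres \<Rightarrow> ('a, 'b, 'f, 'g, 'p) upres \<Rightarrow> ('b, 'g) catpres \<Rightarrow> bool" where
  "wf_upres C P D \<longleftrightarrow> wf_catpres C \<and> wf_catpres D \<and>
     (\<forall>p \<in> pfuns P. psrc P p \<in> sorts C \<and> ptgt P p \<in> sorts D) \<and>
     (\<forall>(s, u, v) \<in> peqns P. \<exists>c d. s = Inl c \<and>
         chain (tot C P D) s u (Inr d) \<and> chain (tot C P D) s v (Inr d))"

definition finite_upres :: "('a, 'f) catpres \<Rightarrow> ('a, 'b, 'f, 'g, 'p) upres \<Rightarrow> ('b, 'g) catpres \<Rightarrow> bool" where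
  "finite_upres C P D \<longleftrightarrow> finite_catpres C \<and> finite_catpres D \<and> finite (pfuns P) \<and> finite (peqns P)"

definition nongenerative :: "('a, 'f) catpres \<Rightarrow> ('a, 'b, 'f, 'g, 'p) upres \<Rightarrow> ('b, 'g) catpres \<Rightarrow> bool" where
  "nongenerative C P D \<longleftrightarrow>
     (\<forall>f \<in> funs C. \<forall>p \<in> pfuns P. ftgt C f = psrc P p \<longrightarrow>
        (\<exists>p' \<in> pfuns P. \<exists>g d. chain D (ptgt P p') g d \<and>
           peq (tot C P D) (Inl (fsrc C f)) [Inl f, Inr (Inl p)] (Inr (Inl p') # map (Inr \<circ> Inr) g)))"

text \<open>The profunctor [[P]] : [[C]] -/-> [[D]]: its elements over (c,d) are classes of cross-paths,
 with left action by C-paths and right action by D-paths.\<close>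
definition pelts :: "('a, 'f) catpres \<Rightarrow> ('a, 'b, 'f, 'g, 'p) upres \<Rightarrow> ('b, 'g) catpres
                      \<Rightarrow> 'a \<Rightarrow> 'b \<Rightarrow> ('f + 'p + 'g) list set set" where
  "pelts C P D c d = homs (tot C P D) (Inl c) (Inr d)"

definition lact :: "('a, 'f) catpres \<Rightarrow> ('a, 'b, 'f, 'g, 'p) upres \<Rightarrow> ('b, 'g) catpres
                      \<Rightarrow> 'a \<Rightarrow> 'f list \<Rightarrow> ('f + 'p + 'g) list set \<Rightarrow> ('f + 'p + 'g) list set" where
  "lact C P D c' f X = (\<Union>u \<in> X. cls (tot C P D) (Inl c') (map Inl f @ u))"

definition ract :: "('a, 'f) catpres \<Rightarrow> ('a, 'b, 'f, 'g, 'p) upres \<Rightarrow> ('b, 'g) catpres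
                      \<Rightarrow> 'a \<Rightarrow> ('f + 'p + 'g) list set \<Rightarrow> 'g list \<Rightarrow> ('f + 'p + 'g) list set" where
  "ract C P D c X g = (\<Union>u \<in> X. cls (tot C P D) (Inl c) (u @ map (Inr \<circ> Inr) g))"

definition comp_triples ::
  "('a, 'f) catpres \<Rightarrow> ('a, 'b, 'f, 'g, 'p) upres \<Rightarrow> ('b, 'g) catpres \<Rightarrow> ('b, 'c, 'g, 'h, 'q) upres
    \<Rightarrow> ('c, 'h) catpres \<Rightarrow> 'a \<Rightarrow> 'c
    \<Rightarrow> ('b \<times> ('f + 'p + 'g) list set \<times> ('g + 'q + 'h) list set) set" where
  "comp_triples C P D Q E c e =
     {(d, X, Y). d \<in> sorts D \<and> X \<in> pelts C P D c d \<and> Y \<in> pelts D Q E d e}"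

inductive comp_eq ::
  "('a, 'f) catpres \<Rightarrow> ('a, 'b, 'f, 'g, 'p) upres \<Rightarrow> ('b, 'g) catpres \<Rightarrow> ('b, 'c, 'g, 'h, 'q) upres
    \<Rightarrow> ('c, 'h) catpres \<Rightarrow> 'a \<Rightarrow> 'c
    \<Rightarrow> ('b \<times> ('f + 'p + 'g) list set \<times> ('g + 'q + 'h) list set)
    \<Rightarrow> ('b \<times> ('f + 'p + 'g) list set \<times> ('g + 'q + 'h) list set) \<Rightarrow> bool"
  for C P D Q E c e where
  rfl: "x \<in> comp_triples C P D Q E c e \<Longrightarrow> comp_eq C P D Q E c e x x"
| gen: "chain D d g d' \<Longrightarrow> X \<in> pelts C P D c d \<Longrightarrow> Y \<in> pelts D Q E d' e \<Longrightarrow>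
        comp_eq C P D Q E c e (d, X, lact D Q E d g Y) (d', ract C P D c X g, Y)"
| sym: "comp_eq C P D Q E c e x y \<Longrightarrow> comp_eq C P D Q E c e y x"
| trans: "comp_eq C P D Q E c e x y \<Longrightarrow> comp_eq C P D Q E c e y z \<Longrightarrow> comp_eq C P D Q E c e x z"

definition comp_elts where
  "comp_elts C P D Q E c e = comp_triples C P D Q E c e // {(x, y). comp_eq C P D Q E c e x y}"

definition cact where
  "cact C P D Q E c' e' f Z h =
     {w. \<exists>(d, X, Y) \<in> Z. comp_eq C P D Q E c' e' (d, lact C P D c' f X, ract D Q E d Y h) w}"

definition iso_to_comp ::
  "('a, 'f) catpres \<Rightarrow> ('a, 'c, 'f, 'h, 'r) upres \<Rightarrow> ('c, 'h) catpres
   \<Rightarrow> ('a, 'b, 'f, 'g, 'p) upres \<Rightarrow> ('b, 'g) catpres \<Rightarrow> ('b, 'c, 'g, 'h, 'q) upres \<Rightarrow> bool" where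
  "iso_to_comp C R E P D Q \<longleftrightarrow>
     (\<exists>\<phi>. (\<forall>c \<in> sorts C. \<forall>e \<in> sorts E.
              bij_betw (\<phi> c e) (pelts C R E c e) (comp_elts C P D Q E c e)) \<and>
          (\<forall>c c' e e' f h X. chain C c' f c \<longrightarrow> chain E e h e' \<longrightarrow> X \<in> pelts C R E c e \<longrightarrow>
              \<phi> c' e' (ract C R E c' (lact C R E c' f X) h) = cact C P D Q E c' e' f (\<phi> c e X) h))"

end

theory Submission
  imports Defs
begin


lemma chain_sort: "chain T s u t \<Longrightarrow> s \<in> sorts T"
  by (cases u) auto

lemma chain_append: "chain T s (u @ v) t \<longleftrightarrow> (\<exists>m. chain T s u m \<and> chain T m v t)"
  by (induction u arbitrary: s) (auto dest: chain_sort)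

lemma chain_fun: "chain T s u t1 \<Longrightarrow> chain T s u t2 \<Longrightarrow> t1 = t2"
  by (induction u arbitrary: s) auto

lemma chain_tgt_sort: "wf_catpres T \<Longrightarrow> chain T s u t \<Longrightarrow> t \<in> sorts T"
  by (induction u arbitrary: s) (auto simp: wf_catpres_def)

lemma peq_chain: "peq T s u v \<Longrightarrow> wf_catpres T \<Longrightarrow> \<exists>t. chain T s u t \<and> chain T s v t"
proof (induction rule: peq.induct)
  case (ax s u v) then show ?case by (auto simp: wf_catpres_def)
next
  case (rfl s u t) then show ?case by auto
next
  case (sym s u v) then show ?case by auto
next
  case (trans s u v w)
  then obtain t1 t2 where "chain T s u t1" "chain T s v t1" "chain T s v t2" "chain T s w t2" by blast
  moreover have "t1 = t2" using calculation chain_fun by metis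
  ultimately show ?case by auto
next
  case (pre s u v f) then show ?case by (auto simp: wf_catpres_def)
next
  case (post s u v t f)
  then obtain t1 where "chain T s u t1" "chain T s v t1" by blast
  moreover have "t1 = t" using calculation post chain_fun by metis
  ultimately show ?case using post by (auto simp: chain_append wf_catpres_def)
qed

lemma peq_post_path: "peq T s u v \<Longrightarrow> chain T s u m \<Longrightarrow> chain T m w t \<Longrightarrow> peq T s (u @ w) (v @ w)"
proof (induction w arbitrary: u v m)
  case Nil then show ?case by simp
next
  case (Cons f w)
  have "peq T s (u @ [f]) (v @ [f])" using Cons by (intro peq.post) auto
  moreover have "chain T s (u @ [f]) (ftgt T f)" using Cons by (auto simp: chain_append dest: chain_sort)
  ultimately show ?case using Cons.IH[of "u @ [f]" "v @ [f]"] Cons.prems by auto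
qed

lemma peq_pre_path: "peq T s u v \<Longrightarrow> chain T s' g s \<Longrightarrow> peq T s' (g @ u) (g @ v)"
proof (induction g arbitrary: s')
  case Nil then show ?case by simp
next
  case (Cons f g)
  then have "peq T (ftgt T f) (g @ u) (g @ v)" by auto
  then have "peq T (fsrc T f) (f # g @ u) (f # g @ v)" using Cons by (intro peq.pre) auto
  then show ?case using Cons by auto
qed

lemma cls_eq: "peq T s u v \<Longrightarrow> cls T s u = cls T s v"
  unfolding cls_def by (auto intro: peq.sym peq.trans)

lemma cls_self: "chain T s u t \<Longrightarrow> u \<in> cls T s u"
  unfolding cls_def by (auto intro: peq.rfl)

lemma UN_cls_post:
  assumes "wf_catpres T" "chain T s u0 m" "chain T m w t"
  shows "(\<Union>v\<in>cls T s u0. cls T s (v @ w)) = cls T s (u0 @ w)"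
proof
  show "(\<Union>v\<in>cls T s u0. cls T s (v @ w)) \<subseteq> cls T s (u0 @ w)"
  proof
    fix x assume "x \<in> (\<Union>v\<in>cls T s u0. cls T s (v @ w))"
    then obtain v where v: "peq T s u0 v" "x \<in> cls T s (v @ w)" by (auto simp: cls_def)
    have "peq T s (u0 @ w) (v @ w)" using peq_post_path[OF v(1) assms(2,3)] .
    then show "x \<in> cls T s (u0 @ w)" using v(2) cls_eq by metis
  qed
next
  show "cls T s (u0 @ w) \<subseteq> (\<Union>v\<in>cls T s u0. cls T s (v @ w))"
    using cls_self[OF assms(2)] by auto
qed

lemma UN_cls_pre:
  assumes "chain T s u0 m" "chain T s' g s"
  shows "(\<Union>v\<in>cls T s u0. cls T s' (g @ v)) = cls T s' (g @ u0)"
proof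
  show "(\<Union>v\<in>cls T s u0. cls T s' (g @ v)) \<subseteq> cls T s' (g @ u0)"
  proof
    fix x assume "x \<in> (\<Union>v\<in>cls T s u0. cls T s' (g @ v))"
    then obtain v where v: "peq T s u0 v" "x \<in> cls T s' (g @ v)" by (auto simp: cls_def)
    have "peq T s' (g @ u0) (g @ v)" using peq_pre_path[OF v(1) assms(2)] .
    then show "x \<in> cls T s' (g @ u0)" using v(2) cls_eq by metis
  qed
next
  show "cls T s' (g @ u0) \<subseteq> (\<Union>v\<in>cls T s u0. cls T s' (g @ v))"
    using cls_self[OF assms(1)] by auto
qed

lemma chainL: "chain C s g t \<Longrightarrow> chain (tot C P D) (Inl s) (map Inl g) (Inl t)"
  by (induction g arbitrary: s) (auto simp: tot_def)

lemma chainR: "chain D s w t \<Longrightarrow> chain (tot C P D) (Inr s) (map (Inr \<circ> Inr) w) (Inr t)"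
  by (induction w arbitrary: s) (auto simp: tot_def)

lemma chainR_inv: "chain (tot C P D) (Inr s) v t \<Longrightarrow> \<exists>w t'. v = map (Inr \<circ> Inr) w \<and> chain D s w t' \<and> t = Inr t'"
proof (induction v arbitrary: s)
  case Nil then show ?case by (auto simp: tot_def intro: exI[of _ "[]"])
next
  case (Cons f v)
  then have "f \<in> (Inr \<circ> Inr) ` funs D" "fsrc (tot C P D) f = Inr s"
    by (auto simp: tot_def)
  then obtain g where g: "f = Inr (Inr g)" "g \<in> funs D" "fsrc D g = s" by (auto simp: tot_def)
  have "chain (tot C P D) (Inr (ftgt D g)) v t" using Cons g by (auto simp: tot_def)
  then obtain w t' where "v = map (Inr \<circ> Inr) w" "chain D (ftgt D g) w t'" "t = Inr t'" using Cons.IH by blast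
  then show ?case using g Cons.prems by (intro exI[of _ "g # w"] exI[of _ t']) (auto simp: tot_def)
qed

lemma chainL_nofuns: "funs C = {} \<Longrightarrow> chain (tot C P D) (Inl c) l (Inr e) \<Longrightarrow>
   \<exists>r w. l = Inr (Inl r) # map (Inr \<circ> Inr) w \<and> r \<in> pfuns P \<and> psrc P r = c \<and> chain D (ptgt P r) w e"
proof (cases l)
  case Nil
  assume "chain (tot C P D) (Inl c) l (Inr e)" then show ?thesis using Nil by auto
next
  case (Cons f v)
  assume a: "funs C = {}" "chain (tot C P D) (Inl c) l (Inr e)"
  then have "f \<in> funs (tot C P D)" "fsrc (tot C P D) f = Inl c" using Cons by auto
  then obtain r where r: "f = Inr (Inl r)" "r \<in> pfuns P" "psrc P r = c" using a by (auto simp: tot_def)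
  have "chain (tot C P D) (Inr (ptgt P r)) v (Inr e)" using a Cons r by (auto simp: tot_def)
  from chainR_inv[OF this] show ?thesis using r Cons by auto
qed

lemma wf_tot:
  assumes "wf_upres C P D" shows "wf_catpres (tot C P D)"
proof -
  have C: "wf_catpres C" and D: "wf_catpres D" and P: "\<forall>p \<in> pfuns P. psrc P p \<in> sorts C \<and> ptgt P p \<in> sorts D"
    and PE: "\<forall>(s, u, v) \<in> peqns P. \<exists>c d. s = Inl c \<and> chain (tot C P D) s u (Inr d) \<and> chain (tot C P D) s v (Inr d)"
    using assms unfolding wf_upres_def by auto
  have 1: "\<forall>f \<in> funs (tot C P D). fsrc (tot C P D) f \<in> sorts (tot C P D) \<and> ftgt (tot C P D) f \<in> sorts (tot C P D)"
    using C D P unfolding wf_catpres_def tot_def by auto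
  have 2: "\<exists>t. chain (tot C P D) s u t \<and> chain (tot C P D) s v t" if "(s, u, v) \<in> eqns (tot C P D)" for s u v
  proof -
    have "(s, u, v) \<in> (\<lambda>(s, u, v). (Inl s, map Inl u, map Inl v)) ` eqns C \<or> (s, u, v) \<in> peqns P \<or>
       (s, u, v) \<in> (\<lambda>(s, u, v). (Inr s, map (Inr \<circ> Inr) u, map (Inr \<circ> Inr) v)) ` eqns D"
      using that by (simp add: tot_def)
    then show ?thesis
    proof (elim disjE)
      assume "(s, u, v) \<in> (\<lambda>(s, u, v). (Inl s, map Inl u, map Inl v)) ` eqns C"
      then obtain s0 u0 v0 where "(s0, u0, v0) \<in> eqns C" "s = Inl s0" "u = map Inl u0" "v = map Inl v0" by auto
      moreover then obtain t where "chain C s0 u0 t" "chain C s0 v0 t" using C unfolding wf_catpres_def by blast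
      ultimately show ?thesis using chainL[of C s0 u0 t P D] chainL[of C s0 v0 t P D] by auto
    next
      assume "(s, u, v) \<in> peqns P" then show ?thesis using PE by blast
    next
      assume "(s, u, v) \<in> (\<lambda>(s, u, v). (Inr s, map (Inr \<circ> Inr) u, map (Inr \<circ> Inr) v)) ` eqns D"
      then obtain s0 u0 v0 where "(s0, u0, v0) \<in> eqns D" "s = Inr s0" "u = map (Inr \<circ> Inr) u0" "v = map (Inr \<circ> Inr) v0" by auto
      moreover then obtain t where "chain D s0 u0 t" "chain D s0 v0 t" using D unfolding wf_catpres_def by blast
      ultimately show ?thesis using chainR[of D s0 u0 t C P] chainR[of D s0 v0 t C P] by auto
    qed
  qed
  show ?thesis unfolding wf_catpres_def using 1 2 by blast
qed



fun nf :: "nat list \<Rightarrow> nat list" where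
  "nf [] = []"
| "nf (x # w) = (if x = 1 then 1 # dropWhile (\<lambda>y. y = 1) w else x # nf w)"

lemma dropWhile_idem_app: "dropWhile P (dropWhile P x @ z) = dropWhile P (x @ z)"
  by (induction x) auto

lemma nf_append: "nf (x @ z) = nf (nf x @ z)"
  by (induction x) (auto simp: dropWhile_idem_app)

lemma nf_zeros: "set a \<subseteq> {0} \<Longrightarrow> nf (a @ z) = a @ nf z"
  by (induction a) auto

lemma nf_rep: "nf y = replicate n 0 \<Longrightarrow> y = replicate n 0"
proof (induction y arbitrary: n)
  case Nil then show ?case by simp
next
  case (Cons x y)
  show ?case
  proof (cases "x = 1")
    case True then show ?thesis using Cons.prems by (cases n) auto
  next
    case False
    then obtain m where "n = Suc m" "x = 0" "nf y = replicate m 0" using Cons.prems by (cases n) auto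
    then show ?thesis using Cons.IH by auto
  qed
qed

definition G :: "nat \<Rightarrow> nat list \<Rightarrow> bool" where
  "G K x \<longleftrightarrow> take (Suc K) x = replicate (Suc K) 0"

lemma G_len: "G K x \<Longrightarrow> Suc K \<le> length x"
proof -
  assume "G K x"
  then have "length (take (Suc K) x) = Suc K" by (simp add: G_def)
  then show ?thesis by simp
qed

lemma G_app: "\<not> G K x \<Longrightarrow> G K (x @ z) \<Longrightarrow> x = replicate (length x) 0"
proof -
  assume a: "\<not> G K x" "G K (x @ z)"
  have "length x < Suc K"
  proof (rule ccontr)
    assume "\<not> length x < Suc K"
    then have "take (Suc K) (x @ z) = take (Suc K) x" by simp
    with a show False unfolding G_def by simp
  qed
  then have "take (Suc K) (x @ z) = x @ take (Suc K - length x) z" by simp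
  then have "x @ take (Suc K - length x) z = replicate (Suc K) 0" using a unfolding G_def by simp
  then have "set (x @ take (Suc K - length x) z) = {0}" by (simp add: set_replicate_conv_if)
  then have "set x \<subseteq> {0}" by auto
  then show ?thesis by (intro replicate_eqI) auto
qed

lemma nf_id_zeros: "set x \<subseteq> {0} \<Longrightarrow> nf x = x"
  using nf_zeros[of x "[]"] by simp

lemma word_step:
  assumes "nf x = nf y" "G K x \<or> G K y \<longrightarrow> x = y"
  shows "nf (x @ z) = nf (y @ z) \<and> (G K (x @ z) \<or> G K (y @ z) \<longrightarrow> x @ z = y @ z)"
proof -
  have 1: "nf (x @ z) = nf (y @ z)" using assms(1) nf_append by metis
  have 2: "x = y" if "G K (x @ z)" "\<not> G K x" "\<not> G K y" "nf x = nf y" for x y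
  proof -
    have "x = replicate (length x) 0" using G_app that by blast
    moreover have "set (replicate (length x) (0::nat)) \<subseteq> {0}" by (auto simp: in_set_replicate)
    ultimately have "nf x = replicate (length x) 0" using nf_id_zeros by metis
    then have "y = replicate (length x) 0" using that nf_rep by metis
    then show ?thesis using \<open>x = replicate (length x) 0\<close> by simp
  qed
  show ?thesis
  proof (intro conjI impI)
    show "nf (x @ z) = nf (y @ z)" using 1 .
    assume g: "G K (x @ z) \<or> G K (y @ z)"
    show "x @ z = y @ z"
    proof (cases "x = y")
      case True then show ?thesis by simp
    next
      case False
      then have n: "\<not> G K x" "\<not> G K y" using assms(2) by blast+
      from g show ?thesis
      proof
        assume "G K (x @ z)" then show ?thesis using 2[of x y] n assms(1) by simp
      next
        assume "G K (y @ z)" then show ?thesis using 2[of y x] n assms(1) by simp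
      qed
    qed
  qed
qed



definition C0 :: "(nat, nat) catpres" where
  "C0 = \<lparr>sorts = {0}, funs = {}, fsrc = \<lambda>_. 0, ftgt = \<lambda>_. 0, eqns = {}\<rparr>"
definition D0 :: "(nat, nat) catpres" where
  "D0 = \<lparr>sorts = {0}, funs = {0}, fsrc = \<lambda>_. 0, ftgt = \<lambda>_. 0, eqns = {}\<rparr>"
definition E0 :: "(nat, nat) catpres" where
  "E0 = \<lparr>sorts = {0}, funs = {0, 1}, fsrc = \<lambda>_. 0, ftgt = \<lambda>_. 0, eqns = {}\<rparr>"
definition P0 :: "(nat, nat, nat, nat, nat) upres" where
  "P0 = \<lparr>pfuns = {0}, psrc = \<lambda>_. 0, ptgt = \<lambda>_. 0, peqns = {}\<rparr>"
definition Q0 :: "(nat, nat, nat, nat, nat) upres" where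
  "Q0 = \<lparr>pfuns = {0}, psrc = \<lambda>_. 0, ptgt = \<lambda>_. 0,
     peqns = {(Inl 0, [Inl 0, Inr (Inl 0)], [Inr (Inl 0), Inr (Inr 0)]),
              (Inl 0, [Inr (Inl 0), Inr (Inr 1)], [Inr (Inl 0), Inr (Inr 1), Inr (Inr 1)])}\<rparr>"

lemmas defs0 = C0_def D0_def E0_def P0_def Q0_def

lemma wfP: "wf_upres C0 P0 D0"
  by (simp add: wf_upres_def wf_catpres_def defs0)

lemma finP: "finite_upres C0 P0 D0"
  by (simp add: finite_upres_def finite_catpres_def defs0)

lemma ngP: "nongenerative C0 P0 D0"
  by (simp add: nongenerative_def defs0)

lemma wfQ: "wf_upres D0 Q0 E0"
  by (simp add: wf_upres_def wf_catpres_def defs0 tot_def)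

lemma finQ: "finite_upres D0 Q0 E0"
  by (simp add: finite_upres_def finite_catpres_def defs0)

lemma ngQ: "nongenerative D0 Q0 E0"
proof -
  have "peq (tot D0 Q0 E0) (Inl 0) [Inl 0, Inr (Inl 0)] (Inr (Inl 0) # map (Inr \<circ> Inr) [0])"
    by (rule peq.ax) (simp add: tot_def defs0)
  moreover have "chain E0 0 [0] 0" by (simp add: defs0)
  moreover have "funs D0 = {0}" "pfuns Q0 = {0}" "fsrc D0 0 = 0" "ptgt Q0 0 = 0" by (simp_all add: defs0)
  ultimately show ?thesis unfolding nongenerative_def
    by (intro ballI impI bexI[of _ 0] exI[of _ "[0]"] exI[of _ 0]) auto
qed

fun wP :: "(nat + nat + nat) list \<Rightarrow> nat list" where
  "wP [] = []"
| "wP (Inl _ # l) = wP l"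
| "wP (Inr (Inl _) # l) = wP l"
| "wP (Inr (Inr _) # l) = 0 # wP l"

fun wQ :: "(nat + nat + nat) list \<Rightarrow> nat list" where
  "wQ [] = []"
| "wQ (Inl _ # l) = 0 # wQ l"
| "wQ (Inr (Inl _) # l) = wQ l"
| "wQ (Inr (Inr e) # l) = e # wQ l"

fun mw :: "(nat \<Rightarrow> nat list) \<Rightarrow> (nat + nat + nat) list \<Rightarrow> nat list" where
  "mw a [] = []"
| "mw a (Inl _ # l) = mw a l"
| "mw a (Inr (Inl r) # l) = a r @ mw a l"
| "mw a (Inr (Inr e) # l) = e # mw a l"

lemma wP_append[simp]: "wP (u @ v) = wP u @ wP v"
  by (induction u rule: wP.induct) auto
lemma wQ_append[simp]: "wQ (u @ v) = wQ u @ wQ v"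
  by (induction u rule: wQ.induct) auto
lemma mw_append[simp]: "mw a (u @ v) = mw a u @ mw a v"
  by (induction a u rule: mw.induct) auto
lemma wP_Cons': "wP (x # l) = wP [x] @ wP l"
  by (metis append_Cons append_Nil wP_append)
lemma wP_zeros: "set (wP l) \<subseteq> {0}"
  by (induction l rule: wP.induct) auto
lemma wP_mapR[simp]: "wP (map (Inr \<circ> Inr) w) = replicate (length w) 0"
  by (induction w) auto
lemma wQ_mapR[simp]: "wQ (map (Inr \<circ> Inr) w) = w"
  by (induction w) auto
lemma wQ_mapL[simp]: "wQ (map Inl g) = replicate (length g) 0"
  by (induction g) auto
lemma mw_mapR[simp]: "mw a (map (Inr \<circ> Inr) w) = w"
  by (induction w) auto

lemma invP: "peq (tot C0 P0 D0) s u v \<Longrightarrow> wP u = wP v"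
proof (induction rule: peq.induct)
  case (ax s u v) then show ?case by (simp add: tot_def defs0)
next
  case (pre s u v f)
  have "wP (f # u) = wP [f] @ wP u" "wP (f # v) = wP [f] @ wP v" by (rule wP_Cons')+
  then show ?case using pre.IH by simp
qed auto

lemma invQ: "peq (tot D0 Q0 E0) s u v \<Longrightarrow> (\<forall>e. s = Inr e \<longrightarrow> u = v) \<and> nf (wQ u) = nf (wQ v)"
proof (induction rule: peq.induct)
  case (ax s u v)
  then have "(s, u, v) \<in> peqns Q0" by (simp add: tot_def defs0)
  then show ?case by (simp add: defs0) (elim disjE; simp)
next
  case (pre s u v f)
  show ?case
  proof (cases f)
    case (Inl g)
    then have "g = 0" "s = Inl 0" "fsrc (tot D0 Q0 E0) f = Inl 0" using pre.hyps(2,3) by (auto simp: tot_def defs0)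
    then show ?thesis using pre.IH Inl by simp
  next
    case (Inr f')
    then have "\<exists>e. s = Inr e" using pre.hyps(3) by (cases f') (auto simp: tot_def)
    then have "u = v" using pre.IH by blast
    then show ?thesis by simp
  qed
next
  case (post s u v t f)
  show ?case
  proof (cases "\<exists>e. s = Inr e")
    case True then have "u = v" using post.IH by blast
    then show ?thesis by simp
  next
    case False
    have "nf (wQ u @ wQ [f]) = nf (wQ v @ wQ [f])" using post.IH nf_append by metis
    then show ?thesis using False by (simp only: wQ_append) blast
  qed
next
  case (rfl s u t) show ?case by simp
next
  case (sym s u v)
  from sym.IH have a: "\<forall>e. s = Inr e \<longrightarrow> u = v" and b: "nf (wQ u) = nf (wQ v)" by blast+
  show ?case
  proof (intro conjI allI impI)
    fix e assume "s = Inr e" then show "v = u" using a by (metis)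
  next
    show "nf (wQ v) = nf (wQ u)" using b by (rule HOL.sym)
  qed
next
  case (trans s u v w)
  from trans.IH have a: "\<forall>e. s = Inr e \<longrightarrow> u = v" "\<forall>e. s = Inr e \<longrightarrow> v = w"
    and b: "nf (wQ u) = nf (wQ v)" "nf (wQ v) = nf (wQ w)" by blast+
  show ?case
  proof (intro conjI allI impI)
    fix e assume "s = Inr e" then show "u = w" using a by (metis)
  next
    show "nf (wQ u) = nf (wQ w)" using b by (rule HOL.trans)
  qed
qed

lemma invR:
  assumes "peq (tot C0 R E0) s u v"
    and eq: "\<forall>(s, u, v) \<in> peqns R. (\<exists>c. s = Inl c) \<and> nf (mw a u) = nf (mw a v) \<and> \<not> G K (mw a u) \<and> \<not> G K (mw a v)"
  shows "(\<forall>e. s = Inr e \<longrightarrow> u = v) \<and> nf (mw a u) = nf (mw a v) \<and> (G K (mw a u) \<or> G K (mw a v) \<longrightarrow> mw a u = mw a v)"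
  using assms(1)
proof (induction rule: peq.induct)
  case (ax s u v)
  then have "(s, u, v) \<in> peqns R" by (simp add: tot_def defs0)
  from bspec[OF eq this] have "(\<exists>c. s = Inl c) \<and> nf (mw a u) = nf (mw a v) \<and> \<not> G K (mw a u) \<and> \<not> G K (mw a v)"
    by simp
  then show ?case by blast
next
  case (pre s u v f)
  from pre.hyps(2) have "f \<in> (Inr \<circ> Inl) ` pfuns R \<union> (Inr \<circ> Inr) ` funs E0" by (simp add: tot_def defs0)
  then obtain x where x: "f = Inr x" by auto
  have "\<exists>e. s = Inr e" using pre.hyps(3) x by (cases x) (auto simp: tot_def)
  then have "u = v" using pre.IH by blast
  then show ?case by simp
next
  case (post s u v t f)
  show ?case
  proof (cases "\<exists>e. s = Inr e")
    case True then have "u = v" using post.IH by blast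
    then show ?thesis by simp
  next
    case False
    have a: "nf (mw a u) = nf (mw a v)" and b: "G K (mw a u) \<or> G K (mw a v) \<longrightarrow> mw a u = mw a v"
      using post.IH by blast+
    have "nf (mw a u @ mw a [f]) = nf (mw a v @ mw a [f]) \<and> (G K (mw a u @ mw a [f]) \<or> G K (mw a v @ mw a [f]) \<longrightarrow> mw a u @ mw a [f] = mw a v @ mw a [f])"
      by (rule word_step[OF a b])
    then show ?thesis using False by (simp only: mw_append) blast
  qed
next
  case (rfl s u t) show ?case by simp
next
  case (sym s u v)
  from sym.IH have a: "\<forall>e. s = Inr e \<longrightarrow> u = v" and b: "nf (mw a u) = nf (mw a v)"
    and c: "G K (mw a u) \<or> G K (mw a v) \<longrightarrow> mw a u = mw a v" by blast+
  have c': "G K (mw a v) \<or> G K (mw a u) \<longrightarrow> mw a v = mw a u"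
  proof
    assume "G K (mw a v) \<or> G K (mw a u)"
    then have "G K (mw a u) \<or> G K (mw a v)" by blast
    then have "mw a u = mw a v" using c by blast
    then show "mw a v = mw a u" by simp
  qed
  show ?case
  proof (intro conjI allI)
    fix e show "s = Inr e \<longrightarrow> v = u" using a by metis
  next
    show "nf (mw a v) = nf (mw a u)" using b by (rule HOL.sym)
  next
    show "G K (mw a v) \<or> G K (mw a u) \<longrightarrow> mw a v = mw a u" by (rule c')
  qed
next
  case (trans s u v w)
  have a: "\<forall>e. s = Inr e \<longrightarrow> u = w" using trans.IH by blast
  have b: "nf (mw a u) = nf (mw a w)" using trans.IH by (metis (no_types))
  have c: "mw a u = mw a w" if "G K (mw a u) \<or> G K (mw a w)"
  proof -
    from that show ?thesis
    proof
      assume "G K (mw a u)"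
      then have "mw a u = mw a v" using trans.IH by blast
      then have "G K (mw a v)" using \<open>G K (mw a u)\<close> by simp
      then have "mw a v = mw a w" using trans.IH by blast
      then show ?thesis using \<open>mw a u = mw a v\<close> by simp
    next
      assume "G K (mw a w)"
      then have "mw a v = mw a w" using trans.IH by blast
      then have "G K (mw a v)" using \<open>G K (mw a w)\<close> by simp
      then have "mw a u = mw a v" using trans.IH by blast
      then show ?thesis using \<open>mw a v = mw a w\<close> by simp
    qed
  qed
  show ?case using a b c by blast
qed



abbreviation "TP \<equiv> tot C0 P0 D0"
abbreviation "TQ \<equiv> tot D0 Q0 E0"

definition nu :: "nat \<times> (nat + nat + nat) list set \<times> (nat + nat + nat) list set \<Rightarrow> nat list" where
  "nu t = (case t of (d, X, Y) \<Rightarrow> nf (wP (SOME u. u \<in> X) @ wQ (SOME v. v \<in> Y)))"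

lemma wfTP: "wf_catpres TP" by (rule wf_tot[OF wfP])
lemma wfTQ: "wf_catpres TQ" by (rule wf_tot[OF wfQ])

lemma nu_cls:
  assumes "chain TP (Inl c) u m" "chain TQ (Inl d') v m'"
  shows "nu (d, cls TP (Inl c) u, cls TQ (Inl d') v) = wP u @ nf (wQ v)"
proof -
  define x where "x = (SOME x. x \<in> cls TP (Inl c) u)"
  define y where "y = (SOME y. y \<in> cls TQ (Inl d') v)"
  have "x \<in> cls TP (Inl c) u" unfolding x_def using cls_self[OF assms(1)] by (rule someI)
  then have "peq TP (Inl c) u x" by (simp add: cls_def)
  then have x: "wP x = wP u" using invP by metis
  have "y \<in> cls TQ (Inl d') v" unfolding y_def using cls_self[OF assms(2)] by (rule someI)
  then have "peq TQ (Inl d') v y" by (simp add: cls_def)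
  then have y: "nf (wQ y) = nf (wQ v)" using invQ by metis
  have "nu (d, cls TP (Inl c) u, cls TQ (Inl d') v) = nf (wP x @ wQ y)"
    unfolding nu_def x_def y_def by simp
  also have "\<dots> = wP x @ nf (wQ y)" using nf_zeros[OF wP_zeros] by blast
  finally show ?thesis using x y by simp
qed

lemma pelts_cls:
  assumes "X \<in> pelts C P D c d"
  obtains u where "chain (tot C P D) (Inl c) u (Inr d)" "X = cls (tot C P D) (Inl c) u"
  using assms unfolding pelts_def homs_def by blast

lemma lact_nil:
  assumes "chain (tot C P D) (Inl c) u t"
  shows "lact C P D c [] (cls (tot C P D) (Inl c) u) = cls (tot C P D) (Inl c) u"
proof -
  have s: "chain (tot C P D) (Inl c) [] (Inl c)" using chain_sort[OF assms] by simp
  show ?thesis unfolding lact_def using UN_cls_pre[OF assms s] by simp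
qed

lemma lact_cls:
  assumes "chain (tot C P D) (Inl c) u t" "chain C c' g c"
  shows "lact C P D c' g (cls (tot C P D) (Inl c) u) = cls (tot C P D) (Inl c') (map Inl g @ u)"
  unfolding lact_def using UN_cls_pre[OF assms(1) chainL[OF assms(2)]] by simp

lemma ract_cls:
  assumes "wf_upres C P D" "chain (tot C P D) (Inl c) u (Inr d)" "chain D d g d'"
  shows "ract C P D c (cls (tot C P D) (Inl c) u) g = cls (tot C P D) (Inl c) (u @ map (Inr \<circ> Inr) g)"
  unfolding ract_def using UN_cls_post[OF wf_tot[OF assms(1)] assms(2) chainR[OF assms(3)]] by simp

lemma nu_comp_eq: "comp_eq C0 P0 D0 Q0 E0 c e x y \<Longrightarrow> nu x = nu y"
proof (induction rule: comp_eq.induct)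
  case (gen d g d' X Y)
  obtain u0 where u0: "chain TP (Inl c) u0 (Inr d)" "X = cls TP (Inl c) u0" using gen(2) by (rule pelts_cls)
  obtain v0 where v0: "chain TQ (Inl d') v0 (Inr e)" "Y = cls TQ (Inl d') v0" using gen(3) by (rule pelts_cls)
  have l: "lact D0 Q0 E0 d g Y = cls TQ (Inl d) (map Inl g @ v0)" using lact_cls[OF v0(1) gen(1)] v0(2) by simp
  have r: "ract C0 P0 D0 c X g = cls TP (Inl c) (u0 @ map (Inr \<circ> Inr) g)" using ract_cls[OF wfP u0(1) gen(1)] u0(2) by simp
  have c1: "chain TQ (Inl d) (map Inl g @ v0) (Inr e)" using chainL[OF gen(1)] v0(1) by (auto simp: chain_append)
  have c2: "chain TP (Inl c) (u0 @ map (Inr \<circ> Inr) g) (Inr d')" using chainR[OF gen(1)] u0(1) by (auto simp: chain_append)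
  have "nu (d, X, lact D0 Q0 E0 d g Y) = wP u0 @ nf (replicate (length g) 0 @ wQ v0)"
    using nu_cls[OF u0(1) c1] u0(2) l by simp
  also have "\<dots> = wP u0 @ replicate (length g) 0 @ nf (wQ v0)" by (subst nf_zeros) (auto simp: in_set_replicate)
  also have "\<dots> = nu (d', ract C0 P0 D0 c X g, Y)"
    using nu_cls[OF c2 v0(1)] r v0(2) by simp
  finally show ?case .
qed auto

lemma sortsTQ: "chain TQ (Inl d) v t \<Longrightarrow> d = 0"
  using chain_sort by (fastforce simp: tot_def defs0)
lemma sortsTP: "chain TP (Inl d) v t \<Longrightarrow> d = 0"
  using chain_sort by (fastforce simp: tot_def defs0)

lemma comp_eq_triples: "comp_eq C0 P0 D0 Q0 E0 c e x y \<Longrightarrow>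
   x \<in> comp_triples C0 P0 D0 Q0 E0 c e \<and> y \<in> comp_triples C0 P0 D0 Q0 E0 c e"
proof (induction rule: comp_eq.induct)
  case (gen d g d' X Y)
  obtain u0 where u0: "chain TP (Inl c) u0 (Inr d)" "X = cls TP (Inl c) u0" using gen(2) by (rule pelts_cls)
  obtain v0 where v0: "chain TQ (Inl d') v0 (Inr e)" "Y = cls TQ (Inl d') v0" using gen(3) by (rule pelts_cls)
  have l: "lact D0 Q0 E0 d g Y = cls TQ (Inl d) (map Inl g @ v0)" using lact_cls[OF v0(1) gen(1)] v0(2) by simp
  have r: "ract C0 P0 D0 c X g = cls TP (Inl c) (u0 @ map (Inr \<circ> Inr) g)" using ract_cls[OF wfP u0(1) gen(1)] u0(2) by simp
  have c1: "chain TQ (Inl d) (map Inl g @ v0) (Inr e)" using chainL[OF gen(1)] v0(1) by (auto simp: chain_append)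
  have c2: "chain TP (Inl c) (u0 @ map (Inr \<circ> Inr) g) (Inr d')" using chainR[OF gen(1)] u0(1) by (auto simp: chain_append)
  have wfD: "wf_catpres D0" by (simp add: defs0 wf_catpres_def)
  have "d \<in> sorts D0" "d' \<in> sorts D0" using chain_sort[OF gen(1)] chain_tgt_sort[OF wfD gen(1)] by auto
  then show ?case unfolding comp_triples_def pelts_def homs_def using u0 v0 l r c1 c2 by auto
qed auto

lemma comp_elts_cls:
  assumes "Z \<in> comp_elts C0 P0 D0 Q0 E0 c e"
  obtains t where "t \<in> comp_triples C0 P0 D0 Q0 E0 c e" "Z = {y. comp_eq C0 P0 D0 Q0 E0 c e t y}"
  using assms unfolding comp_elts_def by (auto elim!: quotientE)

definition nuZ where "nuZ Z = nu (SOME z. z \<in> Z)"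

lemma nuZ:
  assumes "Z \<in> comp_elts C0 P0 D0 Q0 E0 c e"
  shows "Z \<noteq> {}" "Z \<subseteq> comp_triples C0 P0 D0 Q0 E0 c e" "\<forall>z \<in> Z. nu z = nuZ Z"
proof -
  obtain t where t: "t \<in> comp_triples C0 P0 D0 Q0 E0 c e" "Z = {y. comp_eq C0 P0 D0 Q0 E0 c e t y}"
    using assms by (rule comp_elts_cls)
  have tZ: "t \<in> Z" using t(2) comp_eq.rfl[OF t(1)] by simp
  then show "Z \<noteq> {}" by blast
  show "Z \<subseteq> comp_triples C0 P0 D0 Q0 E0 c e" using t comp_eq_triples by blast
  have "\<forall>z\<in>Z. nu z = nu t" using t(2) nu_comp_eq by fastforce
  moreover have "(SOME z. z \<in> Z) \<in> Z" using tZ by (rule someI)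
  ultimately show "\<forall>z \<in> Z. nu z = nuZ Z" unfolding nuZ_def by metis
qed

lemma nu_act:
  assumes "(d, X, Y) \<in> comp_triples C0 P0 D0 Q0 E0 c e" "chain E0 e w e'"
  shows "nu (d, lact C0 P0 D0 c [] X, ract D0 Q0 E0 d Y w) = nf (nu (d, X, Y) @ w)"
proof -
  have X: "X \<in> pelts C0 P0 D0 c d" and Y: "Y \<in> pelts D0 Q0 E0 d e" using assms(1) by (auto simp: comp_triples_def)
  obtain u0 where u0: "chain TP (Inl c) u0 (Inr d)" "X = cls TP (Inl c) u0" using X by (rule pelts_cls)
  obtain v0 where v0: "chain TQ (Inl d) v0 (Inr e)" "Y = cls TQ (Inl d) v0" using Y by (rule pelts_cls)
  have l: "lact C0 P0 D0 c [] X = X" using lact_nil[OF u0(1)] u0(2) by simp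
  have r: "ract D0 Q0 E0 d Y w = cls TQ (Inl d) (v0 @ map (Inr \<circ> Inr) w)" using ract_cls[OF wfQ v0(1) assms(2)] v0(2) by simp
  have c1: "chain TQ (Inl d) (v0 @ map (Inr \<circ> Inr) w) (Inr e')" using chainR[OF assms(2)] v0(1) by (auto simp: chain_append)
  have "nu (d, lact C0 P0 D0 c [] X, ract D0 Q0 E0 d Y w) = wP u0 @ nf (wQ v0 @ w)"
    using nu_cls[OF u0(1) c1] l r u0(2) by simp
  also have "\<dots> = wP u0 @ nf (nf (wQ v0) @ w)" using nf_append by metis
  also have "\<dots> = nf (wP u0 @ nf (wQ v0) @ w)" using nf_zeros[OF wP_zeros] by metis
  also have "\<dots> = nf (nu (d, X, Y) @ w)" using nu_cls[OF u0(1) v0(1)] u0(2) v0(2) by simp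
  finally show ?thesis .
qed

lemma nu_cact:
  assumes "Z \<in> comp_elts C0 P0 D0 Q0 E0 c e" "chain E0 e w e'"
  shows "\<forall>z \<in> cact C0 P0 D0 Q0 E0 c e' [] Z w. nu z = nf (nuZ Z @ w)"
proof
  fix z assume "z \<in> cact C0 P0 D0 Q0 E0 c e' [] Z w"
  then obtain d X Y where t: "(d, X, Y) \<in> Z" and ce: "comp_eq C0 P0 D0 Q0 E0 c e' (d, lact C0 P0 D0 c [] X, ract D0 Q0 E0 d Y w) z"
    unfolding cact_def by auto
  have "nu z = nu (d, lact C0 P0 D0 c [] X, ract D0 Q0 E0 d Y w)" using nu_comp_eq[OF ce] by simp
  also have "\<dots> = nf (nu (d, X, Y) @ w)" using nu_act[OF _ assms(2)] nuZ(2)[OF assms(1)] t by blast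
  also have "\<dots> = nf (nuZ Z @ w)" using nuZ(3)[OF assms(1)] t by simp
  finally show "nu z = nf (nuZ Z @ w)" .
qed

lemma TQ_facts: "fsrc TQ (Inl 0) = Inl 0" "ftgt TQ (Inl 0) = Inl 0" "fsrc TQ (Inr (Inl 0)) = Inl 0"
  "ftgt TQ (Inr (Inl 0)) = Inr 0" "Inl 0 \<in> funs TQ" "Inr (Inl 0) \<in> funs TQ"
  "Inr (Inr 0) \<in> funs TQ" "Inr (Inr 1) \<in> funs TQ" "Inl 0 \<in> sorts TQ" "Inr 0 \<in> sorts TQ"
  "fsrc TQ (Inr (Inr e)) = Inr 0" "ftgt TQ (Inr (Inr e)) = Inr 0"
  by (simp_all add: tot_def defs0)

lemma Qnorm: "chain TQ (Inl 0) v (Inr 0) \<Longrightarrow> peq TQ (Inl 0) v (Inr (Inl 0) # map (Inr \<circ> Inr) (wQ v))"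
proof (induction v)
  case Nil then show ?case by simp
next
  case (Cons f v)
  have f: "f \<in> funs TQ" "fsrc TQ f = Inl 0" and cv: "chain TQ (ftgt TQ f) v (Inr 0)" using Cons.prems by auto
  from f have "f = Inl 0 \<or> f = Inr (Inl 0)" by (auto simp: tot_def defs0)
  then show ?case
  proof
    assume q: "f = Inr (Inl 0)"
    then have "chain TQ (Inr 0) v (Inr 0)" using cv TQ_facts by simp
    then obtain w where w: "v = map (Inr \<circ> Inr) w" using chainR_inv by metis
    have "wQ (f # v) = w" using q w by simp
    then have "Inr (Inl 0) # map (Inr \<circ> Inr) (wQ (f # v)) = f # v" using q w by simp
    then show ?case using peq.rfl[OF Cons.prems] by metis
  next
    assume g: "f = Inl 0"
    then have cv': "chain TQ (Inl 0) v (Inr 0)" using cv TQ_facts by simp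
    define w where "w = wQ v"
    have IH: "peq TQ (Inl 0) v (Inr (Inl 0) # map (Inr \<circ> Inr) w)" using Cons.IH[OF cv'] unfolding w_def .
    obtain t where "chain TQ (Inl 0) v t" "chain TQ (Inl 0) (Inr (Inl 0) # map (Inr \<circ> Inr) w) t"
      using peq_chain[OF IH wfTQ] by blast
    then have cw: "chain TQ (Inl 0) (Inr (Inl 0) # map (Inr \<circ> Inr) w) (Inr 0)" using cv' chain_fun by metis
    then have cw': "chain TQ (Inr 0) (map (Inr \<circ> Inr) w) (Inr 0)" using TQ_facts by simp
    have 1: "peq TQ (Inl 0) (Inl 0 # v) (Inl 0 # Inr (Inl 0) # map (Inr \<circ> Inr) w)"
      using peq.pre[OF IH, of "Inl 0"] TQ_facts by simp
    have ax: "peq TQ (Inl 0) [Inl 0, Inr (Inl 0)] [Inr (Inl 0), Inr (Inr 0)]"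
      by (rule peq.ax) (simp add: tot_def defs0)
    have c2: "chain TQ (Inl 0) [Inl 0, Inr (Inl 0)] (Inr 0)" using TQ_facts by simp
    have 2: "peq TQ (Inl 0) (Inl 0 # Inr (Inl 0) # map (Inr \<circ> Inr) w) (Inr (Inl 0) # Inr (Inr 0) # map (Inr \<circ> Inr) w)"
      using peq_post_path[OF ax c2 cw'] by (simp only: append_Cons append_Nil)
    have 3: "(Inr (Inl 0) # Inr (Inr 0) # map (Inr \<circ> Inr) w) = Inr (Inl 0) # map (Inr \<circ> Inr) (wQ (f # v))"
      using g w_def by simp
    have "peq TQ (Inl 0) (Inl 0 # v) (Inr (Inl 0) # map (Inr \<circ> Inr) (wQ (f # v)))"
      using peq.trans[OF 1 2] 3 by metis
    then show ?case using g by metis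
  qed
qed

lemma wQ_repL[simp]: "wQ (replicate m (Inl x)) = replicate m 0"
  by (induction m) auto

lemma Qk: "peq TQ (Inl 0) (Inr (Inl 0) # map (Inr \<circ> Inr) (replicate m 0 @ [1]))
                           (Inr (Inl 0) # map (Inr \<circ> Inr) (replicate m 0 @ [1, 1]))"
proof -
  let ?g = "map Inl (replicate m (0::nat)) :: (nat + nat + nat) list"
  have cg: "chain TQ (Inl 0) ?g (Inl 0)" by (rule chainL) (induction m, simp_all add: defs0)
  have ax: "peq TQ (Inl 0) [Inr (Inl 0), Inr (Inr 1)] [Inr (Inl 0), Inr (Inr 1), Inr (Inr 1)]"
    by (rule peq.ax) (simp add: tot_def defs0)
  have 1: "peq TQ (Inl 0) (?g @ [Inr (Inl 0), Inr (Inr 1)]) (?g @ [Inr (Inl 0), Inr (Inr 1), Inr (Inr 1)])"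
    by (rule peq_pre_path[OF ax cg])
  have c1: "chain TQ (Inl 0) (?g @ [Inr (Inl 0), Inr (Inr 1)]) (Inr 0)" using cg TQ_facts by (simp add: chain_append)
  have c2: "chain TQ (Inl 0) (?g @ [Inr (Inl 0), Inr (Inr 1), Inr (Inr 1)]) (Inr 0)" using cg TQ_facts by (simp add: chain_append)
  have n1: "peq TQ (Inl 0) (?g @ [Inr (Inl 0), Inr (Inr 1)]) (Inr (Inl 0) # map (Inr \<circ> Inr) (replicate m 0 @ [1]))"
    using Qnorm[OF c1] by simp
  have n2: "peq TQ (Inl 0) (?g @ [Inr (Inl 0), Inr (Inr 1), Inr (Inr 1)]) (Inr (Inl 0) # map (Inr \<circ> Inr) (replicate m 0 @ [1, 1]))"
    using Qnorm[OF c2] by simp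
  show ?thesis using peq.trans[OF peq.trans[OF peq.sym[OF n1] 1] n2] .
qed

lemma wQ_repR[simp]: "wQ (replicate m (Inr (Inr x))) = replicate m x"
  by (induction m) auto
lemma nf_rep0[simp]: "nf (replicate m 0) = replicate m 0"
  by (induction m) auto

lemma app_rep: "x @ y = replicate n c \<Longrightarrow> y = replicate (n - length x) c"
proof -
  assume h: "x @ y = replicate n c"
  have "y = drop (length x) (x @ y)" by simp
  also have "\<dots> = replicate (n - length x) c" using h by simp
  finally show ?thesis .
qed

lemma chainE_rep: "chain E0 0 (replicate m 0) 0"
  by (induction m) (simp_all add: defs0)

lemma main_neg:
  fixes R :: "(nat, nat, nat, nat, nat) upres"
  assumes wfR: "wf_upres C0 R E0" and finR: "finite_upres C0 R E0" and iso: "iso_to_comp C0 R E0 P0 D0 Q0"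
  shows False
proof -
  let ?T = "tot C0 R E0"
  obtain \<phi> where bij: "\<forall>c\<in>sorts C0. \<forall>e\<in>sorts E0. bij_betw (\<phi> c e) (pelts C0 R E0 c e) (comp_elts C0 P0 D0 Q0 E0 c e)"
    and nat: "\<forall>c c' e e' f h X. chain C0 c' f c \<longrightarrow> chain E0 e h e' \<longrightarrow> X \<in> pelts C0 R E0 c e \<longrightarrow>
        \<phi> c' e' (ract C0 R E0 c' (lact C0 R E0 c' f X) h) = cact C0 P0 D0 Q0 E0 c' e' f (\<phi> c e X) h"
    using iso unfolding iso_to_comp_def by blast
  have bij0: "bij_betw (\<phi> 0 0) (pelts C0 R E0 0 0) (comp_elts C0 P0 D0 Q0 E0 0 0)" using bij by (simp add: defs0)
  have wfT: "wf_catpres ?T" by (rule wf_tot[OF wfR])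
  have wfE: "wf_catpres E0" by (simp add: defs0 wf_catpres_def)
  have c00: "chain C0 0 [] 0" by (simp add: defs0)
  define a where "a = (\<lambda>r. nuZ (\<phi> 0 0 (cls ?T (Inl 0) [Inr (Inl r)])))"
  have nat0: "\<phi> 0 0 (cls ?T (Inl 0) (l @ map (Inr \<circ> Inr) w)) = cact C0 P0 D0 Q0 E0 0 0 [] (\<phi> 0 0 (cls ?T (Inl 0) l)) w"
    if cl: "chain ?T (Inl 0) l (Inr 0)" and cw: "chain E0 0 w 0" for l w
  proof -
    have X: "cls ?T (Inl 0) l \<in> pelts C0 R E0 0 0" unfolding pelts_def homs_def using cl by blast
    have "cls ?T (Inl 0) (l @ map (Inr \<circ> Inr) w) = ract C0 R E0 0 (lact C0 R E0 0 [] (cls ?T (Inl 0) l)) w"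
      using lact_nil[OF cl] ract_cls[OF wfR cl cw] by simp
    then show ?thesis using nat c00 cw X by metis
  qed
  have key: "(\<forall>z\<in>\<phi> 0 0 (cls ?T (Inl 0) l). nu z = nf (mw a l)) \<and> \<phi> 0 0 (cls ?T (Inl 0) l) \<in> comp_elts C0 P0 D0 Q0 E0 0 0"
    if cl: "chain ?T (Inl 0) l (Inr 0)" for l
  proof -
    have "funs C0 = {}" by (simp add: defs0)
    from chainL_nofuns[OF this cl] obtain r w where rw: "l = Inr (Inl r) # map (Inr \<circ> Inr) w" "r \<in> pfuns R"
      "psrc R r = 0" "chain E0 (ptgt R r) w 0" by blast
    have "ptgt R r \<in> sorts E0" using wfR rw(2) unfolding wf_upres_def by blast
    then have pt: "ptgt R r = 0" by (simp add: defs0)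
    have cw: "chain E0 0 w 0" using rw(4) pt by simp
    have cr: "chain ?T (Inl 0) [Inr (Inl r)] (Inr 0)" using rw(2,3) pt by (simp add: tot_def defs0)
    have Xr: "cls ?T (Inl 0) [Inr (Inl r)] \<in> pelts C0 R E0 0 0" unfolding pelts_def homs_def using cr by blast
    have Zr: "\<phi> 0 0 (cls ?T (Inl 0) [Inr (Inl r)]) \<in> comp_elts C0 P0 D0 Q0 E0 0 0" using bij_betwE[OF bij0] Xr by blast
    have e: "\<phi> 0 0 (cls ?T (Inl 0) l) = cact C0 P0 D0 Q0 E0 0 0 [] (\<phi> 0 0 (cls ?T (Inl 0) [Inr (Inl r)])) w"
      using nat0[OF cr cw] rw(1) by simp
    have "\<forall>z\<in>\<phi> 0 0 (cls ?T (Inl 0) l). nu z = nf (a r @ w)"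
      using nu_cact[OF Zr cw] e unfolding a_def by simp
    moreover have "mw a l = a r @ w" using rw(1) by simp
    moreover have X: "cls ?T (Inl 0) l \<in> pelts C0 R E0 0 0" unfolding pelts_def homs_def using cl by blast
    ultimately show ?thesis using bij_betwE[OF bij0] by auto
  qed
  define K where "K = Max ((\<lambda>(s, u, v). length (mw a u) + length (mw a v)) ` peqns R)"
  have finE: "finite (peqns R)" using finR by (simp add: finite_upres_def)
  have eqs: "\<forall>(s, u, v) \<in> peqns R. (\<exists>c. s = Inl c) \<and> nf (mw a u) = nf (mw a v) \<and> \<not> G K (mw a u) \<and> \<not> G K (mw a v)"
  proof (intro ballI)
    fix x assume xin: "x \<in> peqns R"
    obtain s u v where x: "x = (s, u, v)" by (cases x)
    have inn: "(s, u, v) \<in> peqns R" using xin x by simp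
    obtain c d where cd: "s = Inl c" "chain ?T s u (Inr d)" "chain ?T s v (Inr d)"
      using wfR inn unfolding wf_upres_def by blast
    have "Inl c \<in> sorts ?T" using chain_sort cd by metis
    then have c0: "c = 0" by (auto simp: tot_def defs0)
    have "Inr d \<in> sorts ?T" using chain_tgt_sort[OF wfT] cd by metis
    then have d0: "d = 0" by (auto simp: tot_def defs0)
    have cu: "chain ?T (Inl 0) u (Inr 0)" and cv: "chain ?T (Inl 0) v (Inr 0)" using cd c0 d0 by simp_all
    have "peq ?T (Inl 0) u v" by (rule peq.ax) (use inn c0 cd in \<open>simp add: tot_def\<close>)
    then have ceq: "cls ?T (Inl 0) u = cls ?T (Inl 0) v" by (rule cls_eq)
    have Zu: "\<phi> 0 0 (cls ?T (Inl 0) u) \<in> comp_elts C0 P0 D0 Q0 E0 0 0" using key[OF cu] by blast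
    obtain z where z: "z \<in> \<phi> 0 0 (cls ?T (Inl 0) u)" using nuZ(1)[OF Zu] by blast
    have "nu z = nf (mw a u)" using key[OF cu] z by blast
    moreover have "nu z = nf (mw a v)" using key[OF cv] z ceq by metis
    ultimately have nfe: "nf (mw a u) = nf (mw a v)" by simp
    have "length (mw a u) + length (mw a v) \<le> K"
      unfolding K_def using finE inn by (intro Max_ge) force+
    then have "\<not> G K (mw a u)" "\<not> G K (mw a v)" using G_len by fastforce+
    then show "case x of (s, u, v) \<Rightarrow> (\<exists>c. s = Inl c) \<and> nf (mw a u) = nf (mw a v) \<and> \<not> G K (mw a u) \<and> \<not> G K (mw a v)"
      using x cd nfe by simp
  qed
  define N where "N = Suc K"
  define t0 where "t0 = (0::nat, cls TP (Inl 0) [Inr (Inl 0)], cls TQ (Inl 0) (Inr (Inl 0) # map (Inr \<circ> Inr) (replicate N 0)))"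
  have cP: "chain TP (Inl 0) [Inr (Inl 0)] (Inr 0)" by (simp add: tot_def defs0)
  have cQ: "chain TQ (Inl 0) (Inr (Inl 0) # map (Inr \<circ> Inr) (replicate N 0)) (Inr 0)"
    using chainR[OF chainE_rep, of D0 Q0 N] by (simp add: tot_def defs0)
  have t0T: "t0 \<in> comp_triples C0 P0 D0 Q0 E0 0 0"
    unfolding t0_def comp_triples_def pelts_def homs_def using cP cQ by (auto simp: defs0)
  define Z0 where "Z0 = {y. comp_eq C0 P0 D0 Q0 E0 0 0 t0 y}"
  have Z0: "Z0 \<in> comp_elts C0 P0 D0 Q0 E0 0 0"
  proof -
    have "{(x, y). comp_eq C0 P0 D0 Q0 E0 0 0 x y} `` {t0} = Z0" unfolding Z0_def by auto
    then show ?thesis unfolding comp_elts_def using quotientI[OF t0T] by metis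
  qed
  have t0Z: "t0 \<in> Z0" unfolding Z0_def using comp_eq.rfl[OF t0T] by simp
  have nut0: "nu t0 = replicate N 0"
    unfolding t0_def using nu_cls[OF cP cQ] by (simp add: nf_id_zeros in_set_replicate)
  have "Z0 \<in> \<phi> 0 0 ` pelts C0 R E0 0 0" using bij0 Z0 by (simp add: bij_betw_def)
  then obtain X where X: "X \<in> pelts C0 R E0 0 0" "\<phi> 0 0 X = Z0" by (rule imageE) simp
  obtain l where cl: "chain ?T (Inl 0) l (Inr 0)" "X = cls ?T (Inl 0) l" using X(1) by (rule pelts_cls)
  have "t0 \<in> \<phi> 0 0 (cls ?T (Inl 0) l)" using X(2) cl(2) t0Z by simp
  then have "nu t0 = nf (mw a l)" using key[OF cl(1)] by blast
  then have "nf (mw a l) = replicate N 0" using nut0 by simp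
  then have mwl: "mw a l = replicate N 0" by (rule nf_rep)
  have cE1: "chain E0 0 [1] 0" and cE2: "chain E0 0 [1, 1] 0" by (simp_all add: defs0)
  define l1 where "l1 = l @ map (Inr \<circ> Inr) [1::nat]"
  define l2 where "l2 = l @ map (Inr \<circ> Inr) [1::nat, 1]"
  have cl1: "chain ?T (Inl 0) l1 (Inr 0)" unfolding l1_def using cl(1) chainR[OF cE1, of C0 R] by (auto simp: chain_append)
  have cl2: "chain ?T (Inl 0) l2 (Inr 0)" unfolding l2_def using cl(1) chainR[OF cE2, of C0 R] by (auto simp: chain_append)
  have e1: "\<phi> 0 0 (cls ?T (Inl 0) l1) = cact C0 P0 D0 Q0 E0 0 0 [] Z0 [1]"
    unfolding l1_def using nat0[OF cl(1) cE1] X(2) cl(2) by simp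
  have e2: "\<phi> 0 0 (cls ?T (Inl 0) l2) = cact C0 P0 D0 Q0 E0 0 0 [] Z0 [1, 1]"
    unfolding l2_def using nat0[OF cl(1) cE2] X(2) cl(2) by simp
  have rY: "ract D0 Q0 E0 d Y [1] = ract D0 Q0 E0 d Y [1, 1]" if dXY: "(d, X', Y) \<in> Z0" for d X' Y
  proof -
    have T: "(d, X', Y) \<in> comp_triples C0 P0 D0 Q0 E0 0 0" using nuZ(2)[OF Z0] dXY by blast
    have nuv: "nu (d, X', Y) = replicate N 0" using dXY nut0 nu_comp_eq unfolding Z0_def by fastforce
    have X': "X' \<in> pelts C0 P0 D0 0 d" and Y: "Y \<in> pelts D0 Q0 E0 d 0" using T by (auto simp: comp_triples_def)
    obtain u0 where u0: "chain TP (Inl 0) u0 (Inr d)" "X' = cls TP (Inl 0) u0" using X' by (rule pelts_cls)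
    obtain v0 where v0: "chain TQ (Inl d) v0 (Inr 0)" "Y = cls TQ (Inl d) v0" using Y by (rule pelts_cls)
    have d0: "d = 0" using sortsTQ[OF v0(1)] .
    have "wP u0 @ nf (wQ v0) = replicate N 0" using nu_cls[OF u0(1) v0(1)] u0(2) v0(2) nuv by simp
    then have "nf (wQ v0) = replicate (N - length (wP u0)) 0" by (rule app_rep)
    then have wq: "wQ v0 = replicate (N - length (wP u0)) 0" by (rule nf_rep)
    define m where "m = N - length (wP u0)"
    have v0c: "chain TQ (Inl 0) v0 (Inr 0)" using v0(1) d0 by simp
    have nq: "peq TQ (Inl 0) v0 (Inr (Inl 0) # map (Inr \<circ> Inr) (replicate m 0))" using Qnorm[OF v0c] wq m_def by simp
    have r1: "ract D0 Q0 E0 d Y [1] = cls TQ (Inl 0) (v0 @ map (Inr \<circ> Inr) [1])" using ract_cls[OF wfQ v0c cE1] v0(2) d0 by simp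
    have r2: "ract D0 Q0 E0 d Y [1, 1] = cls TQ (Inl 0) (v0 @ map (Inr \<circ> Inr) [1, 1])" using ract_cls[OF wfQ v0c cE2] v0(2) d0 by simp
    have p1: "peq TQ (Inl 0) (v0 @ map (Inr \<circ> Inr) [1]) (Inr (Inl 0) # map (Inr \<circ> Inr) (replicate m 0 @ [1]))"
      using peq_post_path[OF nq v0c chainR[OF cE1, of D0 Q0]] by simp
    have p2: "peq TQ (Inl 0) (v0 @ map (Inr \<circ> Inr) [1, 1]) (Inr (Inl 0) # map (Inr \<circ> Inr) (replicate m 0 @ [1, 1]))"
      using peq_post_path[OF nq v0c chainR[OF cE2, of D0 Q0]] by simp
    have "peq TQ (Inl 0) (v0 @ map (Inr \<circ> Inr) [1]) (v0 @ map (Inr \<circ> Inr) [1, 1])"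
      using peq.trans[OF peq.trans[OF p1 Qk] peq.sym[OF p2]] .
    then show ?thesis using r1 r2 cls_eq by metis
  qed
  have "cact C0 P0 D0 Q0 E0 0 0 [] Z0 [1] = cact C0 P0 D0 Q0 E0 0 0 [] Z0 [1, 1]"
    unfolding cact_def
  proof (intro Collect_cong bex_cong refl)
    fix w x assume xZ: "x \<in> Z0"
    obtain d X' Y where x: "x = (d, X', Y)" by (cases x)
    have "ract D0 Q0 E0 d Y [1] = ract D0 Q0 E0 d Y [1, 1]" using rY xZ x by simp
    then show "(case x of (d, X, Y) \<Rightarrow> comp_eq C0 P0 D0 Q0 E0 0 0 (d, lact C0 P0 D0 0 [] X, ract D0 Q0 E0 d Y [1]) w) =
               (case x of (d, X, Y) \<Rightarrow> comp_eq C0 P0 D0 Q0 E0 0 0 (d, lact C0 P0 D0 0 [] X, ract D0 Q0 E0 d Y [1, 1]) w)"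
      using x by simp
  qed
  then have "\<phi> 0 0 (cls ?T (Inl 0) l1) = \<phi> 0 0 (cls ?T (Inl 0) l2)" using e1 e2 by simp
  moreover have "cls ?T (Inl 0) l1 \<in> pelts C0 R E0 0 0" "cls ?T (Inl 0) l2 \<in> pelts C0 R E0 0 0"
    unfolding pelts_def homs_def using cl1 cl2 by blast+
  ultimately have "cls ?T (Inl 0) l1 = cls ?T (Inl 0) l2" using bij_betw_imp_inj_on[OF bij0] unfolding inj_on_def by blast
  then have "l2 \<in> cls ?T (Inl 0) l1" using cls_self[OF cl2] by simp
  then have "peq ?T (Inl 0) l1 l2" by (simp add: cls_def)
  from invR[OF this eqs] have "G K (mw a l1) \<or> G K (mw a l2) \<longrightarrow> mw a l1 = mw a l2" by blast
  moreover have "mw a l1 = replicate N 0 @ [1]" "mw a l2 = replicate N 0 @ [1, 1]" using mwl unfolding l1_def l2_def by simp_all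
  moreover have "G K (replicate N 0 @ [1])" unfolding G_def N_def by simp
  ultimately show False by simp
qed


theorem mainTheorem17:
  shows "\<exists>(C :: (nat, nat) catpres) (D :: (nat, nat) catpres) (E :: (nat, nat) catpres)
            (P :: (nat, nat, nat, nat, nat) upres) (Q :: (nat, nat, nat, nat, nat) upres).
           wf_upres C P D \<and> finite_upres C P D \<and> nongenerative C P D \<and>
           wf_upres D Q E \<and> finite_upres D Q E \<and> nongenerative D Q E \<and>
           \<not> (\<exists>R :: (nat, nat, nat, nat, nat) upres.
                 wf_upres C R E \<and> finite_upres C R E \<and> iso_to_comp C R E P D Q)"
proof -
  have "\<not> (\<exists>R :: (nat, nat, nat, nat, nat) upres.
           wf_upres C0 R E0 \<and> finite_upres C0 R E0 \<and> iso_to_comp C0 R E0 P0 D0 Q0)"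
    using main_neg by blast
  then show ?thesis using wfP finP ngP wfQ finQ ngQ by blast
qed

end
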